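(* Let $G$ be a sparsifiable graph and $H$ a graph of minimum degree at least $3$. If $G$ contains $H$ as a minor, then $G$ contains $H$ as an induced minor.
   Context: Graphs are finite and simple. A vertex $v$ of a graph is sparsifiable if (1) $v$ has degree at most $2$, or (2) $v$ has degree $3$ and all of its neighbors have degree at most $2$, or (3) $v$ has degree $3$, one of its neighbors has degree at most $2$, and the two other neighbors form a triangle with $v$. A graph is sparsifiable if every vertex of it is sparsifiable. A minor model of $H$ in $G$ is a family of pairwise disjoint sets $X_v\subseteq V(G)$, $v\in V(H)$, each inducing a connected subgraph, such that for every edge $uv\in E(H)$ there is an edge of $G$ between $X_u$ and $X_v$; it is an induced minor model if moreover for distinct non-adjacent $u,v\in V(H)$ there is no edge between $X_u$ and $X_v$. $G$ contains $H$ as a (induced) minor iff there is a (induced) minor model of $H$ in $G$. *)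

theory Defs
  imports Main
begin

definition simple_graph :: "'a set \<Rightarrow> 'a set set \<Rightarrow> bool" where
  "simple_graph V E \<longleftrightarrow> finite V \<and>
     (\<forall>e\<in>E. \<exists>u v. u \<noteq> v \<and> u \<in> V \<and> v \<in> V \<and> e = {u, v})"

definition neighbors :: "'a set \<Rightarrow> 'a set set \<Rightarrow> 'a \<Rightarrow> 'a set" where
  "neighbors V E v = {u \<in> V. {u, v} \<in> E}"

definition degree :: "'a set \<Rightarrow> 'a set set \<Rightarrow> 'a \<Rightarrow> nat" where
  "degree V E v = card (neighbors V E v)"

definition sparsifiable_vertex :: "'a set \<Rightarrow> 'a set set \<Rightarrow> 'a \<Rightarrow> bool" where
  "sparsifiable_vertex V E v \<longleftrightarrow>
     degree V E v \<le> 2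
   \<or> (degree V E v = 3 \<and> (\<forall>u\<in>neighbors V E v. degree V E u \<le> 2))
   \<or> (degree V E v = 3 \<and> (\<exists>a b c. neighbors V E v = {a, b, c} \<and> a \<noteq> b \<and> a \<noteq> c \<and> b \<noteq> c
          \<and> degree V E a \<le> 2 \<and> {b, c} \<in> E))"

definition sparsifiable :: "'a set \<Rightarrow> 'a set set \<Rightarrow> bool" where
  "sparsifiable V E \<longleftrightarrow> (\<forall>v\<in>V. sparsifiable_vertex V E v)"

definition connected_in :: "'a set \<Rightarrow> 'a set set \<Rightarrow> 'a set \<Rightarrow> bool" where
  "connected_in V E X \<longleftrightarrow> X \<subseteq> V \<and> X \<noteq> {} \<and>
     (\<forall>x\<in>X. \<forall>y\<in>X. (x, y) \<in> {(a, b). a \<in> X \<and> b \<in> X \<and> {a, b} \<in> E}\<^sup>*)"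

definition has_edge_between :: "'a set set \<Rightarrow> 'a set \<Rightarrow> 'a set \<Rightarrow> bool" where
  "has_edge_between E A B \<longleftrightarrow> (\<exists>x\<in>A. \<exists>y\<in>B. {x, y} \<in> E)"

definition minor_model ::
  "'a set \<Rightarrow> 'a set set \<Rightarrow> 'b set \<Rightarrow> 'b set set \<Rightarrow> ('b \<Rightarrow> 'a set) \<Rightarrow> bool" where
  "minor_model V E VH EH X \<longleftrightarrow>
     (\<forall>v\<in>VH. connected_in V E (X v))
   \<and> (\<forall>u\<in>VH. \<forall>v\<in>VH. u \<noteq> v \<longrightarrow> X u \<inter> X v = {})
   \<and> (\<forall>u\<in>VH. \<forall>v\<in>VH. {u, v} \<in> EH \<longrightarrow> has_edge_between E (X u) (X v))"

definition induced_minor_model ::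
  "'a set \<Rightarrow> 'a set set \<Rightarrow> 'b set \<Rightarrow> 'b set set \<Rightarrow> ('b \<Rightarrow> 'a set) \<Rightarrow> bool" where
  "induced_minor_model V E VH EH X \<longleftrightarrow> minor_model V E VH EH X
   \<and> (\<forall>u\<in>VH. \<forall>v\<in>VH. u \<noteq> v \<longrightarrow> {u, v} \<notin> EH \<longrightarrow> \<not> has_edge_between E (X u) (X v))"

definition has_minor :: "'a set \<Rightarrow> 'a set set \<Rightarrow> 'b set \<Rightarrow> 'b set set \<Rightarrow> bool" where
  "has_minor V E VH EH \<longleftrightarrow> (\<exists>X. minor_model V E VH EH X)"

definition has_induced_minor :: "'a set \<Rightarrow> 'a set set \<Rightarrow> 'b set \<Rightarrow> 'b set set \<Rightarrow> bool" where
  "has_induced_minor V E VH EH \<longleftrightarrow> (\<exists>X. induced_minor_model V E VH EH X)"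

end

theory Submission
  imports Defs
begin

locale setting =
  fixes V :: "'a set" and E :: "'a set set" and VH :: "'b set" and EH :: "'b set set"
  assumes sg: "simple_graph V E" and sp: "sparsifiable V E"
    and sh: "simple_graph VH EH" and md: "\<forall>v\<in>VH. degree VH EH v \<ge> 3"
begin

lemma edgeE: assumes "{x,y} \<in> E" shows "x \<noteq> y" "x \<in> V" "y \<in> V"
proof -
  from sg assms obtain u v where "u \<noteq> v" "u \<in> V" "v \<in> V" "{x,y} = {u,v}"
    unfolding simple_graph_def by blast
  then show "x \<noteq> y" "x \<in> V" "y \<in> V" by (auto simp: doubleton_eq_iff)
qed

lemma edgeHE: assumes "{x,y} \<in> EH" shows "x \<noteq> y" "x \<in> VH" "y \<in> VH"
proof -
  from sh assms obtain u v where "u \<noteq> v" "u \<in> VH" "v \<in> VH" "{x,y} = {u,v}"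
    unfolding simple_graph_def by blast
  then show "x \<noteq> y" "x \<in> VH" "y \<in> VH" by (auto simp: doubleton_eq_iff)
qed

lemma finV: "finite V" using sg unfolding simple_graph_def by blast
lemma finVH: "finite VH" using sh unfolding simple_graph_def by blast

lemma nbr_iff: "q \<in> neighbors V E x \<longleftrightarrow> {x,q} \<in> E"
  unfolding neighbors_def using edgeE by (auto simp: insert_commute)

abbreviation model where "model X \<equiv> minor_model V E VH EH X"

definition bad :: "('b \<Rightarrow> 'a set) \<Rightarrow> 'a set set" where
  "bad X = {e\<in>E. \<exists>s\<in>VH. \<exists>t\<in>VH. s \<noteq> t \<and> {s,t} \<notin> EH \<and> (\<exists>p q. e = {p,q} \<and> p \<in> X s \<and> q \<in> X t)}"

definition useful :: "('b \<Rightarrow> 'a set) \<Rightarrow> 'b \<Rightarrow> 'a \<Rightarrow> bool" where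
  "useful X u q \<longleftrightarrow> (\<exists>t\<in>VH. {u,t} \<in> EH \<and> q \<in> X t)"

lemma bad_fin: "finite (bad X)"
proof -
  have "e \<subseteq> V" if "e \<in> E" for e
  proof -
    from sg that obtain u v where "u \<in> V" "v \<in> V" "e = {u,v}"
      unfolding simple_graph_def by blast
    then show ?thesis by simp
  qed
  then have "E \<subseteq> Pow V" by blast
  then have "finite E" using finV by (meson finite_Pow_iff finite_subset)
  then show ?thesis unfolding bad_def by simp
qed

lemma bad_mono: "(\<And>t. X' t \<subseteq> X t) \<Longrightarrow> bad X' \<subseteq> bad X"
  unfolding bad_def by blast

lemma model_conn: "model X \<Longrightarrow> v \<in> VH \<Longrightarrow> connected_in V E (X v)"
  unfolding minor_model_def by blast
lemma model_disj: "model X \<Longrightarrow> s \<in> VH \<Longrightarrow> t \<in> VH \<Longrightarrow> q \<in> X s \<Longrightarrow> q \<in> X t \<Longrightarrow> s = t"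
  unfolding minor_model_def by blast
lemma model_edge: "model X \<Longrightarrow> {s,t} \<in> EH \<Longrightarrow> has_edge_between E (X s) (X t)"
  unfolding minor_model_def using edgeHE by blast
lemma model_sub: "model X \<Longrightarrow> v \<in> VH \<Longrightarrow> X v \<subseteq> V"
  unfolding minor_model_def connected_in_def by blast

lemma heb_sym: "has_edge_between E A B \<longleftrightarrow> has_edge_between E B A"
proof -
  have c: "\<And>x y. {x,y} \<in> E \<Longrightarrow> {y,x} \<in> E" by (simp add: insert_commute)
  show ?thesis unfolding has_edge_between_def using c by blast
qed

lemma no_loop: "{x} \<notin> E"
  using edgeE(1)[of x x] by auto

definition RR :: "'a set \<Rightarrow> ('a \<times> 'a) set" where
  "RR X = {(a, b). a \<in> X \<and> b \<in> X \<and> {a, b} \<in> E}"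

lemma conn_def2: "connected_in V E X \<longleftrightarrow> X \<subseteq> V \<and> X \<noteq> {} \<and> (\<forall>x\<in>X. \<forall>y\<in>X. (x, y) \<in> (RR X)\<^sup>*)"
  unfolding connected_in_def RR_def by simp

lemma conn_single:
  assumes "connected_in V E X" "x \<in> X" "\<forall>q\<in>X. {q,x} \<notin> E"
  shows "X = {x}"
proof -
  have "p = x" if "p \<in> X" for p
  proof -
    have "(x,p) \<in> (RR X)\<^sup>*" using assms that unfolding conn_def2 by blast
    then show ?thesis
    proof (cases rule: converse_rtranclE)
      case (step m)
      then have "m \<in> X" "{x,m} \<in> E" unfolding RR_def by auto
      moreover have "{m,x} = {x,m}" by (rule insert_commute)
      ultimately show ?thesis using assms(3) by auto
    qed simp
  qed
  then show ?thesis using assms(2) by blast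
qed

lemma conn_leaf:
  assumes "connected_in V E X" "x \<in> X" "z \<in> X" "z \<noteq> x" "\<forall>q\<in>X. {q,x} \<in> E \<longrightarrow> q = z"
  shows "connected_in V E (X - {x})"
proof -
  have key: "(r \<noteq> x \<longrightarrow> (p,r) \<in> (RR (X-{x}))\<^sup>*) \<and> (r = x \<longrightarrow> (p,z) \<in> (RR (X-{x}))\<^sup>*)"
    if "(p,r) \<in> (RR X)\<^sup>*" "p \<noteq> x" "p \<in> X" for p r
    using that(1)
  proof (induction rule: rtrancl_induct)
    case base
    then show ?case using that by simp
  next
    case (step r r')
    then have r: "r \<in> X" "r' \<in> X" "{r,r'} \<in> E" unfolding RR_def by auto
    show ?case
    proof (cases "r' = x")
      case True
      then have "r \<noteq> x" using r no_loop by auto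
      moreover have "r = z" using assms(5) r True by auto
      ultimately show ?thesis using step.IH True by auto
    next
      case False
      show ?thesis
      proof (cases "r = x")
        case True
        then have "r' = z" using assms(5) r by (auto simp: insert_commute)
        then show ?thesis using step.IH True False by auto
      next
        case False2: False
        have "(r,r') \<in> RR (X-{x})" using r False False2 unfolding RR_def by auto
        then show ?thesis using step.IH False False2 by (meson rtrancl.rtrancl_into_rtrancl)
      qed
    qed
  qed
  show ?thesis unfolding conn_def2
  proof (intro conjI ballI)
    show "X - {x} \<subseteq> V" using assms(1) unfolding conn_def2 by blast
    show "X - {x} \<noteq> {}" using assms(3,4) by blast
  next
    fix p q assume "p \<in> X - {x}" "q \<in> X - {x}"
    then show "(p,q) \<in> (RR (X-{x}))\<^sup>*" using key[of p q] assms(1) unfolding conn_def2 by blast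
  qed
qed

lemma conn_add:
  assumes "connected_in V E X" "c \<in> X" "{x,c} \<in> E"
  shows "connected_in V E (insert x X)"
proof -
  have m: "(RR X)\<^sup>* \<subseteq> (RR (insert x X))\<^sup>*" by (rule rtrancl_mono) (auto simp: RR_def)
  have xc: "(x,c) \<in> (RR (insert x X))\<^sup>*" "(c,x) \<in> (RR (insert x X))\<^sup>*"
    using assms(2,3) by (auto simp: RR_def insert_commute)
  have "\<forall>p\<in>insert x X. \<forall>q\<in>insert x X. (p,q) \<in> (RR (insert x X))\<^sup>*"
  proof (intro ballI)
    fix p q assume p: "p \<in> insert x X" and q: "q \<in> insert x X"
    have pc: "(p,c) \<in> (RR (insert x X))\<^sup>*"
      using p xc m assms(1,2) unfolding conn_def2 by blast
    have cq: "(c,q) \<in> (RR (insert x X))\<^sup>*"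
      using q xc m assms(1,2) unfolding conn_def2 by blast
    show "(p,q) \<in> (RR (insert x X))\<^sup>*" using pc cq by simp
  qed
  then show ?thesis using assms edgeE(2)[OF assms(3)] unfolding conn_def2 by blast
qed


lemma count:
  assumes m: "model X" and u: "u \<in> VH" and xu: "X u = {x}"
    and sub: "{q. {x,q} \<in> E \<and> useful X u q} \<subseteq> {a,c}"
  shows False
proof -
  let ?N = "neighbors VH EH u"
  have c3: "3 \<le> card ?N" using md u unfolding degree_def by auto
  have ex: "\<exists>q. q \<in> X w \<and> {x,q} \<in> E" if "w \<in> ?N" for w
  proof -
    from that have "{w,u} \<in> EH" unfolding neighbors_def by auto
    then have "{u,w} \<in> EH" by (simp add: insert_commute)
    then have "has_edge_between E (X u) (X w)" using model_edge[OF m] by blast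
    then show ?thesis using xu unfolding has_edge_between_def by auto
  qed
  define f where "f w = (SOME q. q \<in> X w \<and> {x,q} \<in> E)" for w
  have f: "f w \<in> X w \<and> {x, f w} \<in> E" if "w \<in> ?N" for w
    using someI_ex[OF ex[OF that]] unfolding f_def .
  have inj: "inj_on f ?N"
  proof (rule inj_onI)
    fix w1 w2 assume w: "w1 \<in> ?N" "w2 \<in> ?N" "f w1 = f w2"
    then have "w1 \<in> VH" "w2 \<in> VH" unfolding neighbors_def by auto
    then show "w1 = w2" using f[OF w(1)] f[OF w(2)] w(3) model_disj[OF m] by metis
  qed
  have img: "f ` ?N \<subseteq> {a,c}"
  proof
    fix q assume "q \<in> f ` ?N"
    then obtain w where w: "w \<in> ?N" "q = f w" by blast
    have "{w,u} \<in> EH" "w \<in> VH" using w unfolding neighbors_def by auto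
    then have "useful X u q" using f[OF w(1)] w(2) unfolding useful_def by (auto simp: insert_commute)
    then show "q \<in> {a,c}" using sub f[OF w(1)] w(2) by auto
  qed
  have "card ?N = card (f ` ?N)" using card_image[OF inj] by simp
  also have "\<dots> \<le> card {a,c}" using img by (rule card_mono[rotated]) simp
  also have "\<dots> \<le> 2" by (cases "a = c") auto
  finally show False using c3 by simp
qed

lemma remove:
  assumes m: "model X" and u: "u \<in> VH" and xu: "x \<in> X u" and bxy: "{x,y} \<in> bad X"
    and H: "\<forall>q. {x,q} \<in> E \<longrightarrow> q \<noteq> z \<longrightarrow> q \<notin> X u \<and> \<not> useful X u q"
  shows "\<exists>X'. model X' \<and> bad X' \<subset> bad X"
proof -
  have ne: "X u \<noteq> {x}"
  proof
    assume "X u = {x}"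
    moreover have "{q. {x,q} \<in> E \<and> useful X u q} \<subseteq> {z,z}" using H by auto
    ultimately show False using count[OF m u] by blast
  qed
  have cu: "connected_in V E (X u)" using model_conn[OF m u] .
  have "\<exists>q\<in>X u. {q,x} \<in> E" using conn_single[OF cu xu] ne by blast
  then obtain q where q: "q \<in> X u" "{x,q} \<in> E" by (auto simp: insert_commute)
  then have zu: "z \<in> X u" "{x,z} \<in> E" using H by auto
  have zx: "z \<noteq> x" using edgeE(1)[OF zu(2)] by auto
  have leaf: "\<forall>q\<in>X u. {q,x} \<in> E \<longrightarrow> q = z" using H by (auto simp: insert_commute)
  have cu': "connected_in V E (X u - {x})" using conn_leaf[OF cu xu zu(1) zx leaf] .
  define X' where "X' = X(u := X u - {x})"
  have sub: "X' t \<subseteq> X t" for t unfolding X'_def by auto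
  have notin: "x \<notin> X' t" if "t \<in> VH" for t
    using model_disj[OF m that u _ xu] unfolding X'_def by (cases "t = u") auto
  have gen: "has_edge_between E (X' u) (X' t)" if t: "t \<in> VH" "{u,t} \<in> EH" for t
  proof -
    have tu: "t \<noteq> u" using edgeHE(1)[OF t(2)] by auto
    obtain p q where pq: "p \<in> X u" "q \<in> X t" "{p,q} \<in> E"
      using model_edge[OF m t(2)] unfolding has_edge_between_def by blast
    have "p \<noteq> x"
    proof
      assume px: "p = x"
      have "q \<noteq> z"
      proof
        assume "q = z"
        then show False using model_disj[OF m u t(1) zu(1)] pq(2) tu by auto
      qed
      then have "\<not> useful X u q" using H pq px by auto
      then show False using t pq(2) unfolding useful_def by auto
    qed
    then show ?thesis using pq tu unfolding X'_def has_edge_between_def by auto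
  qed
  have model': "model X'"
    unfolding minor_model_def
  proof (intro conjI ballI impI)
    fix t assume "t \<in> VH"
    then show "connected_in V E (X' t)" using model_conn[OF m] cu' unfolding X'_def by auto
  next
    fix s t assume "s \<in> VH" "t \<in> VH" "s \<noteq> t"
    then show "X' s \<inter> X' t = {}" using sub m unfolding minor_model_def by blast
  next
    fix s t assume st: "s \<in> VH" "t \<in> VH" "{s,t} \<in> EH"
    show "has_edge_between E (X' s) (X' t)"
    proof (cases "s = u")
      case True then show ?thesis using gen st by auto
    next
      case False
      show ?thesis
      proof (cases "t = u")
        case True
        then have "has_edge_between E (X' t) (X' s)" using gen st by (auto simp: insert_commute)
        then show ?thesis using heb_sym by blast
      next
        case False2: False
        then show ?thesis using False model_edge[OF m st(3)] unfolding X'_def by auto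
      qed
    qed
  qed
  have "bad X' \<subseteq> bad X" using bad_mono sub by blast
  moreover have "{x,y} \<notin> bad X'"
  proof
    assume "{x,y} \<in> bad X'"
    then obtain s t p q where "s \<in> VH" "t \<in> VH" "{x,y} = {p,q}" "p \<in> X' s" "q \<in> X' t"
      unfolding bad_def by blast
    then show False using notin by (auto simp: doubleton_eq_iff)
  qed
  ultimately show ?thesis using model' bxy by blast
qed

lemma useless_other:
  assumes m: "model X" and "u \<in> VH" "v \<in> VH" "u \<noteq> v" "{u,v} \<notin> EH" "q \<in> X v"
  shows "q \<notin> X u \<and> \<not> useful X u q"
proof
  show "q \<notin> X u"
  proof
    assume "q \<in> X u"
    then have "u = v" using model_disj[OF m assms(2,3) _ assms(6)] by simp
    then show False using assms(4) by simp
  qed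
  show "\<not> useful X u q"
  proof
    assume "useful X u q"
    then obtain t where t: "t \<in> VH" "{u,t} \<in> EH" "q \<in> X t" unfolding useful_def by blast
    then have "t = v" using model_disj[OF m t(1) assms(3) t(3) assms(6)] by simp
    then show False using t assms(5) by simp
  qed
qed

lemma bad_edge:
  assumes "u \<in> VH" "v \<in> VH" "u \<noteq> v" "{u,v} \<notin> EH" "x \<in> X u" "y \<in> X v" "{x,y} \<in> E"
  shows "{x,y} \<in> bad X"
  using assms unfolding bad_def by blast

lemma deg2:
  assumes m: "model X" and u: "u \<in> VH" and v: "v \<in> VH" and uv: "u \<noteq> v" "{u,v} \<notin> EH"
    and xu: "x \<in> X u" and yv: "y \<in> X v" and e: "{x,y} \<in> E" and d: "degree V E x \<le> 2"
  shows "\<exists>X'. model X' \<and> bad X' \<subset> bad X"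
proof -
  let ?N = "neighbors V E x"
  have finN: "finite ?N" using finV unfolding neighbors_def by auto
  have yN: "y \<in> ?N" using e nbr_iff by blast
  have "card (?N - {y}) \<le> Suc 0" using d yN finN unfolding degree_def by auto
  then have one: "\<forall>a\<in>?N - {y}. \<forall>b\<in>?N - {y}. a = b"
    using card_le_Suc0_iff_eq[of "?N - {y}"] finN by simp
  obtain z where z: "?N - {y} \<subseteq> {z}"
  proof (cases "?N - {y} = {}")
    case True then show ?thesis using that by blast
  next
    case False
    then obtain z where "z \<in> ?N - {y}" by blast
    then have "?N - {y} \<subseteq> {z}" using one by auto
    then show ?thesis using that by simp
  qed
  have H: "\<forall>q. {x,q} \<in> E \<longrightarrow> q \<noteq> z \<longrightarrow> q \<notin> X u \<and> \<not> useful X u q"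
  proof (intro allI impI)
    fix q assume "{x,q} \<in> E" "q \<noteq> z"
    then have "q \<in> ?N" using nbr_iff[of q x] by simp
    then have "q = y" using z \<open>q \<noteq> z\<close> by auto
    then show "q \<notin> X u \<and> \<not> useful X u q" using useless_other[OF m u v uv yv] by simp
  qed
  show ?thesis using remove[OF m u xu bad_edge[OF u v uv xu yv e] H] .
qed

lemma move:
  assumes m: "model X" and u: "u \<in> VH" and v: "v \<in> VH" and w: "w \<in> VH"
    and d: "u \<noteq> v" "w \<noteq> u" "w \<noteq> v" and uw: "{u,w} \<in> EH" and vw: "{v,w} \<in> EH"
    and uv: "{u,v} \<notin> EH" and xu: "x \<in> X u" and au: "a \<in> X u" and yv: "y \<in> X v"
    and cw: "c \<in> X w" and Nx: "\<forall>q. {x,q} \<in> E \<longleftrightarrow> q = a \<or> q = y \<or> q = c"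
  shows "\<exists>X'. model X' \<and> bad X' \<subset> bad X"
proof -
  have xa: "{x,a} \<in> E" using Nx[rule_format, of a] by simp
  have ax: "a \<noteq> x" using edgeE(1)[OF xa] by auto
  have xc: "{x,c} \<in> E" "{a,x} \<in> E" using Nx[rule_format, of c] xa by (simp, simp add: insert_commute)
  have xnot: "x \<notin> X t" if "t \<in> VH" "t \<noteq> u" for t using model_disj[OF m that(1) u _ xu] that by auto
  have yu: "y \<notin> X u" using model_disj[OF m u v _ yv] d by auto
  have cu: "c \<notin> X u" using model_disj[OF m u w _ cw] d by auto
  have leaf: "\<forall>q\<in>X u. {q,x} \<in> E \<longrightarrow> q = a"
  proof (intro ballI impI)
    fix q assume "q \<in> X u" "{q,x} \<in> E"
    then have "{x,q} \<in> E" by (simp add: insert_commute)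
    then have "q = a \<or> q = y \<or> q = c" using Nx[rule_format, of q] by simp
    then show "q = a" using yu cu \<open>q \<in> X u\<close> by blast
  qed
  have cu': "connected_in V E (X u - {x})" using conn_leaf[OF model_conn[OF m u] xu au ax leaf] .
  have cw': "connected_in V E (insert x (X w))" using conn_add[OF model_conn[OF m w] cw xc(1)] .
  define X' where "X' = X(u := X u - {x}, w := insert x (X w))"
  have X'u: "X' u = X u - {x}" unfolding X'_def using d(2) by simp
  have X'w: "X' w = insert x (X w)" unfolding X'_def by simp
  have sup: "X t - {x} \<subseteq> X' t" for t unfolding X'_def by auto
  have sub: "p \<in> X t" if "p \<in> X' t" "p \<noteq> x" for p t using that d unfolding X'_def by (auto split: if_splits)
  have xw: "t = w" if "x \<in> X' t" "t \<in> VH" for t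
    using that xnot d unfolding X'_def by (auto split: if_splits)
  have h1: False if "p \<in> X s" "s \<in> VH" "t \<in> VH" "{s,t} \<in> EH" "p = x" "\<not> (s = u \<and> t = w)"
      "q \<in> X t" "{p,q} \<in> E" for p q s t
  proof -
    have su: "s = u" using that xnot by blast
    have st: "s \<noteq> t" using edgeHE(1)[OF that(4)] .
    have "{x,q} \<in> E" using that by simp
    then have "q = a \<or> q = y \<or> q = c" using Nx[rule_format, of q] by simp
    then show False
    proof (elim disjE)
      assume "q = a" then have "t = u" using model_disj[OF m that(3) u that(7)] au by auto
      then show False using st su by auto
    next
      assume "q = y" then have "t = v" using model_disj[OF m that(3) v that(7)] yv by auto
      then show False using uv su that(4) by auto
    next
      assume "q = c" then have "t = w" using model_disj[OF m that(3) w that(7)] cw by auto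
      then show False using su that(6) by auto
    qed
  qed
  have h2: False if "p \<in> X' s" "q \<in> X' t" "s \<in> VH" "t \<in> VH" "s \<noteq> t" "{s,t} \<notin> EH" "p = x" "{p,q} \<in> E" for p q s t
  proof -
    have sw: "s = w" using xw[OF _ that(3)] that(1,7) by simp
    have qx: "q \<noteq> x" using edgeE(1)[OF that(8)] that(7) by auto
    have qt: "q \<in> X t" using sub[OF that(2) qx] .
    have "{x,q} \<in> E" using that by simp
    then have "q = a \<or> q = y \<or> q = c" using Nx[rule_format, of q] by simp
    then show False
    proof (elim disjE)
      assume "q = a" then have "t = u" using model_disj[OF m that(4) u qt] au by auto
      then show False using sw that(6) uw by (auto simp: insert_commute)
    next
      assume "q = y" then have "t = v" using model_disj[OF m that(4) v qt] yv by auto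
      then show False using sw that(6) vw by (auto simp: insert_commute)
    next
      assume "q = c" then have "t = w" using model_disj[OF m that(4) w qt] cw by auto
      then show False using sw that(5) by auto
    qed
  qed
  have model': "model X'"
    unfolding minor_model_def
  proof (intro conjI ballI impI)
    fix t assume "t \<in> VH"
    then have ct: "connected_in V E (X t)" using model_conn[OF m] by blast
    show "connected_in V E (X' t)"
    proof (cases "t = w")
      case True then show ?thesis using cw' unfolding X'_def by simp
    next
      case False
      then show ?thesis using cu' ct unfolding X'_def by (cases "t = u") simp_all
    qed
  next
    fix s t assume st: "s \<in> VH" "t \<in> VH" "s \<noteq> t"
    show "X' s \<inter> X' t = {}"
    proof (rule ccontr)
      assume "X' s \<inter> X' t \<noteq> {}"
      then obtain p where p: "p \<in> X' s" "p \<in> X' t" by blast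
      show False
      proof (cases "p = x")
        case True then show False using xw[OF _ st(1)] xw[OF _ st(2)] p st(3) by simp
      next
        case False
        have "p \<in> X s" "p \<in> X t" using sub[OF p(1) False] sub[OF p(2) False] by auto
        then show False using model_disj[OF m st(1,2)] st(3) by simp
      qed
    qed
  next
    fix s t assume st: "s \<in> VH" "t \<in> VH" "{s,t} \<in> EH"
    show "has_edge_between E (X' s) (X' t)"
    proof (cases "(s = u \<and> t = w) \<or> (s = w \<and> t = u)")
      case True
      have aX: "a \<in> X' u" "x \<in> X' w" unfolding X'u X'w using au ax by simp_all
      have "has_edge_between E (X' u) (X' w)" using aX xc(2) unfolding has_edge_between_def by blast
      then have "has_edge_between E (X' w) (X' u)" using heb_sym[of "X' u" "X' w"] by simp
      with True \<open>has_edge_between E (X' u) (X' w)\<close> show ?thesis by auto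
    next
      case False
      obtain p q where pq: "p \<in> X s" "q \<in> X t" "{p,q} \<in> E"
        using model_edge[OF m st(3)] unfolding has_edge_between_def by blast
      have px: "p \<noteq> x" using h1[OF pq(1) st(1,2,3) _ _ pq(2,3)] False by blast
      have ts: "{t,s} \<in> EH" "{q,p} \<in> E" using st(3) pq(3) by (auto simp: insert_commute)
      have qx: "q \<noteq> x" using h1[OF pq(2) st(2,1) ts(1) _ _ pq(1) ts(2)] False by blast
      have "p \<in> X' s" "q \<in> X' t" using pq px qx sup by auto
      then show ?thesis using pq(3) unfolding has_edge_between_def by blast
    qed
  qed
  have "bad X' \<subseteq> bad X"
  proof
    fix e assume "e \<in> bad X'"
    then obtain s t p q where e: "e \<in> E" "s \<in> VH" "t \<in> VH" "s \<noteq> t" "{s,t} \<notin> EH" "e = {p,q}"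
      "p \<in> X' s" "q \<in> X' t" unfolding bad_def by blast
    have pqE: "{p,q} \<in> E" using e(1,6) by simp
    have ts: "{t,s} \<notin> EH" "{q,p} \<in> E" using e(5) pqE by (simp_all add: insert_commute)
    have px: "p \<noteq> x" using h2[OF e(7,8,2,3,4,5) _ pqE] by blast
    have qx: "q \<noteq> x" using h2[OF e(8,7,3,2) _ ts(1) _ ts(2)] e(4) by blast
    have "p \<in> X s" "q \<in> X t" using sub e(7,8) px qx by auto
    then show "e \<in> bad X" using e(1-6) unfolding bad_def by blast
  qed
  moreover have "{x,y} \<notin> bad X'"
  proof
    assume "{x,y} \<in> bad X'"
    then obtain s t p q where e: "s \<in> VH" "t \<in> VH" "s \<noteq> t" "{s,t} \<notin> EH" "{x,y} = {p,q}"
      "p \<in> X' s" "q \<in> X' t" "{x,y} \<in> E" unfolding bad_def by blast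
    have ts: "{t,s} \<notin> EH" using e(4) by (simp add: insert_commute)
    have pqE: "{p,q} \<in> E" using e(5) e(8) by simp
    have qpE: "{q,p} \<in> E" using pqE by (simp add: insert_commute)
    have ts2: "t \<noteq> s" using e(3) by simp
    show False
    proof (cases "p = x")
      case True show False by (rule h2[OF e(6,7,1,2,3,4) True pqE])
    next
      case False
      then have "q = x" using e(5) by (auto simp: doubleton_eq_iff)
      then show False using h2[OF e(7,6,2,1) ts2 ts _ qpE] by blast
    qed
  qed
  moreover have "{x,y} \<in> E" using Nx[rule_format, of y] by simp
  then have "{x,y} \<in> bad X" using bad_edge[OF u v d(1) uv xu yv] by simp
  ultimately show ?thesis using model' by blast
qed


lemma tri:
  assumes e: "{x,y} \<in> E" and dx: "\<not> degree V E x \<le> 2" and dy: "\<not> degree V E y \<le> 2"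
  shows "\<exists>a c. (\<forall>q. {x,q} \<in> E \<longleftrightarrow> q = a \<or> q = y \<or> q = c) \<and> a \<noteq> y \<and> a \<noteq> c \<and> y \<noteq> c
     \<and> degree V E a \<le> 2 \<and> {y,c} \<in> E"
proof -
  have xV: "x \<in> V" using edgeE(2)[OF e] .
  have yN: "y \<in> neighbors V E x" using nbr_iff[of y x] e by simp
  have sv: "sparsifiable_vertex V E x" using sp xV unfolding sparsifiable_def by blast
  have n2: "\<not> (\<forall>u\<in>neighbors V E x. degree V E u \<le> 2)" using yN dy by blast
  have "\<exists>a b c. neighbors V E x = {a, b, c} \<and> a \<noteq> b \<and> a \<noteq> c \<and> b \<noteq> c
          \<and> degree V E a \<le> 2 \<and> {b, c} \<in> E"
    using sv dx n2 unfolding sparsifiable_vertex_def by blast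
  then obtain a b c where abc: "neighbors V E x = {a,b,c}" "a \<noteq> b" "a \<noteq> c" "b \<noteq> c"
    "degree V E a \<le> 2" "{b,c} \<in> E" by blast
  have Nq: "{x,q} \<in> E \<longleftrightarrow> q = a \<or> q = b \<or> q = c" for q using nbr_iff[of q x] abc(1) by simp
  have "y \<noteq> a" using dy abc(5) by auto
  then have "y = b \<or> y = c" using yN abc(1) by auto
  then show ?thesis
  proof
    assume yb: "y = b"
    show ?thesis
      apply (rule exI[of _ a], rule exI[of _ c])
      using abc yb by (simp add: Nq)
  next
    assume yc: "y = c"
    have "{c,b} \<in> E" using abc(6) by (simp add: insert_commute)
    then show ?thesis
      apply -
      apply (rule exI[of _ a], rule exI[of _ b])
      using abc yc by (auto simp add: Nq)
  qed
qed

lemma step: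
  assumes m: "model X" and u: "u \<in> VH" and v: "v \<in> VH" and uv: "u \<noteq> v" "{u,v} \<notin> EH"
    and xu: "x \<in> X u" and yv: "y \<in> X v" and e: "{x,y} \<in> E"
  shows "\<exists>X'. model X' \<and> bad X' \<subset> bad X"
proof -
  have vu: "v \<noteq> u" "{v,u} \<notin> EH" using uv by (auto simp: insert_commute)
  have e': "{y,x} \<in> E" using e by (simp add: insert_commute)
  show ?thesis
  proof (cases "degree V E x \<le> 2")
    case True then show ?thesis using deg2[OF m u v uv xu yv e] by blast
  next
    case dx: False
    show ?thesis
    proof (cases "degree V E y \<le> 2")
      case True then show ?thesis using deg2[OF m v u vu yv xu e'] by blast
    next
      case dy: False
      obtain a c where Nx: "\<forall>q. {x,q} \<in> E \<longleftrightarrow> q = a \<or> q = y \<or> q = c"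
        and ac: "a \<noteq> y" "a \<noteq> c" "y \<noteq> c" and da: "degree V E a \<le> 2" and yc: "{y,c} \<in> E"
        using tri[OF e dx dy] by blast
      obtain a' c' where Ny: "\<forall>q. {y,q} \<in> E \<longleftrightarrow> q = a' \<or> q = x \<or> q = c'"
        and ac': "a' \<noteq> x" "a' \<noteq> c'" "x \<noteq> c'" and da': "degree V E a' \<le> 2" and xc': "{x,c'} \<in> E"
        using tri[OF e' dy dx] by blast
      have bxy: "{x,y} \<in> bad X" using bad_edge[OF u v uv xu yv e] .
      have byx: "{y,x} \<in> bad X" using bxy by (simp add: insert_commute)
      have NxE: "{x,q} \<in> E \<longleftrightarrow> q = a \<or> q = y \<or> q = c" for q using Nx by blast
      have NyE: "{y,q} \<in> E \<longleftrightarrow> q = a' \<or> q = x \<or> q = c'" for q using Ny by blast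
      have xcE: "{x,c} \<in> E" using NxE[of c] by simp
      have cx: "c \<noteq> x" using edgeE(1)[OF xcE] by auto
      have uo: "q \<notin> X u \<and> \<not> useful X u q" if "q \<in> X v" for q using useless_other[OF m u v uv that] .
      have vo: "q \<notin> X v \<and> \<not> useful X v q" if "q \<in> X u" for q using useless_other[OF m v u vu that] .
      show ?thesis
      proof (cases "c \<in> X u")
        case cU: True
        have "c = a' \<or> c = c'" using NyE[of c] yc cx by simp
        then show ?thesis
        proof
          assume "c = a'"
          then have "degree V E c \<le> 2" using da' by simp
          moreover have "{c,y} \<in> E" using yc by (simp add: insert_commute)
          ultimately show ?thesis using deg2[OF m u v uv cU yv] by blast
        next
          assume cc: "c = c'"
          have H: "\<forall>q. {y,q} \<in> E \<longrightarrow> q \<noteq> a' \<longrightarrow> q \<notin> X v \<and> \<not> useful X v q"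
          proof (intro allI impI)
            fix q assume "{y,q} \<in> E" "q \<noteq> a'"
            then have "q = x \<or> q = c" using NyE[of q] cc by simp
            then show "q \<notin> X v \<and> \<not> useful X v q" using vo xu cU by blast
          qed
          show ?thesis using remove[OF m v yv byx H] .
        qed
      next
        case cnU: False
        show ?thesis
        proof (cases "c \<in> X v")
          case cV: True
          have H: "\<forall>q. {x,q} \<in> E \<longrightarrow> q \<noteq> a \<longrightarrow> q \<notin> X u \<and> \<not> useful X u q"
          proof (intro allI impI)
            fix q assume "{x,q} \<in> E" "q \<noteq> a"
            then have "q = y \<or> q = c" using NxE[of q] by simp
            then show "q \<notin> X u \<and> \<not> useful X u q" using uo yv cV by blast
          qed
          show ?thesis using remove[OF m u xu bxy H] .
        next
          case cnV: False
          have yu: "y \<notin> X u" "\<not> useful X u y" using uo[OF yv] by auto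
          have xv: "x \<notin> X v" "\<not> useful X v x" using vo[OF xu] by auto
          show ?thesis
          proof (cases "a \<in> X u")
            case aNU: False
            have "X u = {x}"
            proof (rule conn_single[OF model_conn[OF m u] xu], intro ballI)
              fix q assume qU: "q \<in> X u"
              show "{q,x} \<notin> E"
              proof
                assume "{q,x} \<in> E"
                then have "{x,q} \<in> E" by (simp add: insert_commute)
                then have "q = a \<or> q = y \<or> q = c" using NxE[of q] by simp
                then show False using aNU yu cnU qU by blast
              qed
            qed
            moreover have "{q. {x,q} \<in> E \<and> useful X u q} \<subseteq> {a,c}"
            proof
              fix q assume "q \<in> {q. {x,q} \<in> E \<and> useful X u q}"
              then have "{x,q} \<in> E" "useful X u q" by auto
              then show "q \<in> {a,c}" using NxE[of q] yu(2) by auto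
            qed
            ultimately show ?thesis using count[OF m u] by blast
          next
            case aU: True
            have ycE: "{y,c'} \<in> E" using NyE[of c'] by simp
            have "c' \<noteq> y" using edgeE(1)[OF ycE] by auto
            then have "c' = a \<or> c' = c" using NxE[of c'] xc' by simp
            then show ?thesis
            proof
              assume "c' = a"
              then have "{a,y} \<in> E" using ycE by (simp add: insert_commute)
              then show ?thesis using deg2[OF m u v uv aU yv _ da] by blast
            next
              assume cc: "c' = c"
              show ?thesis
              proof (cases "useful X u c")
                case False
                have H: "\<forall>q. {x,q} \<in> E \<longrightarrow> q \<noteq> a \<longrightarrow> q \<notin> X u \<and> \<not> useful X u q"
                proof (intro allI impI)
                  fix q assume "{x,q} \<in> E" "q \<noteq> a"
                  then have "q = y \<or> q = c" using NxE[of q] by simp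
                  then show "q \<notin> X u \<and> \<not> useful X u q" using yu cnU False by blast
                qed
                show ?thesis using remove[OF m u xu bxy H] .
              next
                case usu: True
                show ?thesis
                proof (cases "useful X v c")
                  case False
                  have H: "\<forall>q. {y,q} \<in> E \<longrightarrow> q \<noteq> a' \<longrightarrow> q \<notin> X v \<and> \<not> useful X v q"
                  proof (intro allI impI)
                    fix q assume "{y,q} \<in> E" "q \<noteq> a'"
                    then have "q = x \<or> q = c" using NyE[of q] cc by simp
                    then show "q \<notin> X v \<and> \<not> useful X v q" using xv cnV False by blast
                  qed
                  show ?thesis using remove[OF m v yv byx H] .
                next
                  case usv: True
                  obtain w where w: "w \<in> VH" "{u,w} \<in> EH" "c \<in> X w"
                    using usu unfolding useful_def by blast
                  obtain w' where w': "w' \<in> VH" "{v,w'} \<in> EH" "c \<in> X w'"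
                    using usv unfolding useful_def by blast
                  have "w' = w" using model_disj[OF m w'(1) w(1) w'(3) w(3)] .
                  then have vw: "{v,w} \<in> EH" using w'(2) by simp
                  have wu: "w \<noteq> u" using w(3) cnU by auto
                  have wv: "w \<noteq> v" using w(3) cnV by auto
                  show ?thesis using move[OF m u v w(1) uv(1) wu wv w(2) vw uv(2) xu aU yv w(3) Nx] .
                qed
              qed
            qed
          qed
        qed
      qed
    qed
  qed
qed

end

theorem lemma2:
  fixes V :: "'a set" and E :: "'a set set" and VH :: "'b set" and EH :: "'b set set"
  assumes "simple_graph V E" and "sparsifiable V E"
    and "simple_graph VH EH" and "\<forall>v\<in>VH. degree VH EH v \<ge> 3"
    and "has_minor V E VH EH"
  shows "has_induced_minor V E VH EH"
proof -
  interpret setting V E VH EH using assms(1-4) by unfold_locales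
  have main: "minor_model V E VH EH X \<Longrightarrow> has_induced_minor V E VH EH" for X
  proof (induction "card (bad X)" arbitrary: X rule: less_induct)
    case less
    show ?case
    proof (cases "bad X = {}")
      case True
      have "induced_minor_model V E VH EH X"
        unfolding induced_minor_model_def
      proof (intro conjI ballI impI)
        show "minor_model V E VH EH X" by (rule less.prems)
      next
        fix s t assume st: "s \<in> VH" "t \<in> VH" "s \<noteq> t" "{s,t} \<notin> EH"
        show "\<not> has_edge_between E (X s) (X t)"
        proof
          assume "has_edge_between E (X s) (X t)"
          then obtain p q where "p \<in> X s" "q \<in> X t" "{p,q} \<in> E"
            unfolding has_edge_between_def by blast
          then have "{p,q} \<in> bad X" using bad_edge[OF st] by blast
          then show False using True by simp
        qed
      qed
      then show ?thesis unfolding has_induced_minor_def by blast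
    next
      case False
      then obtain e where "e \<in> bad X" by blast
      then obtain s t p q where st: "s \<in> VH" "t \<in> VH" "s \<noteq> t" "{s,t} \<notin> EH"
          "p \<in> X s" "q \<in> X t" "e = {p,q}" "e \<in> E"
        unfolding bad_def by blast
      then have pq: "{p,q} \<in> E" by simp
      obtain X' where X': "minor_model V E VH EH X'" "bad X' \<subset> bad X"
        using step[OF less.prems st(1-4) st(5,6) pq] by blast
      have "card (bad X') < card (bad X)" using psubset_card_mono[OF bad_fin X'(2)] .
      then show ?thesis using less.hyps X'(1) by blast
    qed
  qed
  from assms(5) obtain X where "minor_model V E VH EH X" unfolding has_minor_def by blast
  then show ?thesis using main by blast
qed

end
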